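(* Let $\gamma,\gamma'>0$, $f\in\mathcal H^D\mathcal I^{\mathcal E}_\gamma$ and $g\in\mathcal H^D\mathcal I^{\mathcal E}_{\gamma'}$ with $f*_\gamma g=0$. Then either $f*_\gamma h=0$ for every function $h$ for which $f*_\gamma h$ is defined, or $g*_{\gamma'}h=0$ for every function $h$ for which $g*_{\gamma'}h$ is defined. In particular, $f*_\gamma f=0$ or $g*_{\gamma'}g=0$.
   Context: Fix $q\in(0,1)$. Notation: $(a;q)_k=\prod_{j=0}^{k-1}(1-aq^j)$, $[k]_q!=(q;q)_k/(1-q)^k$. The $q$-derivative is $(\partial f)(x)=\frac{f(x)-f(qx)}{(1-q)x}$ (extended to $x=0$ by continuity for $f$ holomorphic near $0$). For $\gamma>0$, $L(\gamma)=\{\pm q^k\gamma:k\in\mathbb Z\}$ and $\int_\gamma f=(1-q)\sum_{k\in\mathbb Z}\sum_{\epsilon=\pm1}q^k\gamma f(\epsilon q^k\gamma)$ whenever absolutely convergent. $\mathcal I^\infty_\gamma$ is the set of functions $f$ on $L(\gamma)$ with $\int_\gamma|f(x)x^e|<\infty$ for all integers $e\ge0$. Moments: $\mu_{e,\gamma}(f)=q^{(e^2+e)/2}\int_\gamma f(x)x^e$. The $q$-moment series is $\mu_\gamma(f)(t)=\sum_{k\ge0}\mu_{k,\gamma}(f)t^k/[k]_q!$; $\mathcal I^{\mathcal E}_\gamma$ is the set of $f\in\mathcal I^\infty_\gamma$ with $\mu_\gamma(f)$ entire. $\mathcal H^D\mathcal I^{\mathcal E}_\gamma$ is the set of $f\in\mathcal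 I^{\mathcal E}_\gamma$ for which there is an open disk centered at $0$ containing $\{\pm q^k\gamma:k\ge0\}$ and a holomorphic function on it agreeing with $f$ on the lattice points in the disk. The $q$-convolution of $f\in\mathcal I^\infty_\gamma$ with $g$ is $(f*_\gamma g)(x)=\sum_{e\ge0}\frac{(-1)^e\mu_{e,\gamma}(f)}{[e]_q!}(\partial^eg)(x)$ at all $x$ where the $q$-derivatives are defined and the series converges absolutely. *)

theory Defs
  imports "HOL-Complex_Analysis.Complex_Analysis"
begin

definition qlat :: "real \<Rightarrow> real \<Rightarrow> complex set" where
  "qlat q \<gamma> = {complex_of_real (\<epsilon> * q powi k * \<gamma>) | \<epsilon> k. \<epsilon> \<in> {-1, 1::real}}"

definition qint_summand :: "real \<Rightarrow> real \<Rightarrow> (complex \<Rightarrow> complex) \<Rightarrow> int \<times> real \<Rightarrow> complex" where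
  "qint_summand q \<gamma> F = (\<lambda>(k, \<epsilon>). complex_of_real (q powi k * \<gamma>) * F (complex_of_real (\<epsilon> * q powi k * \<gamma>)))"

definition qintegrable :: "real \<Rightarrow> real \<Rightarrow> (complex \<Rightarrow> complex) \<Rightarrow> bool" where
  "qintegrable q \<gamma> F \<longleftrightarrow> (\<lambda>p. norm (qint_summand q \<gamma> F p)) summable_on (UNIV \<times> {-1, 1})"

definition qint :: "real \<Rightarrow> real \<Rightarrow> (complex \<Rightarrow> complex) \<Rightarrow> complex" where
  "qint q \<gamma> F = complex_of_real (1 - q) * infsum (qint_summand q \<gamma> F) (UNIV \<times> {-1, 1})"

definition qfact :: "real \<Rightarrow> nat \<Rightarrow> real" where
  "qfact q k = (\<Prod>j\<in>{1..k}. (1 - q ^ j) / (1 - q))"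

definition qmoment :: "real \<Rightarrow> real \<Rightarrow> (complex \<Rightarrow> complex) \<Rightarrow> nat \<Rightarrow> complex" where
  "qmoment q \<gamma> f e = complex_of_real (q ^ ((e ^ 2 + e) div 2)) * qint q \<gamma> (\<lambda>x. f x * x ^ e)"

definition I_inf :: "real \<Rightarrow> real \<Rightarrow> (complex \<Rightarrow> complex) \<Rightarrow> bool" where
  "I_inf q \<gamma> f \<longleftrightarrow> (\<forall>e::nat. qintegrable q \<gamma> (\<lambda>x. f x * x ^ e))"

definition I_E :: "real \<Rightarrow> real \<Rightarrow> (complex \<Rightarrow> complex) \<Rightarrow> bool" where
  "I_E q \<gamma> f \<longleftrightarrow> I_inf q \<gamma> f \<and>
     (\<forall>t::complex. summable (\<lambda>k. qmoment q \<gamma> f k * t ^ k / complex_of_real (qfact q k)))"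

definition HD_I_E :: "real \<Rightarrow> real \<Rightarrow> (complex \<Rightarrow> complex) \<Rightarrow> bool" where
  "HD_I_E q \<gamma> f \<longleftrightarrow> I_E q \<gamma> f \<and>
     (\<exists>r > \<gamma>. \<exists>F. F holomorphic_on ball 0 r \<and> (\<forall>x \<in> qlat q \<gamma> \<inter> ball 0 r. F x = f x))"

text \<open>q-derivative; at 0 the continuous extension (for h holomorphic near 0) is h'(0).\<close>
definition qderiv :: "real \<Rightarrow> (complex \<Rightarrow> complex) \<Rightarrow> complex \<Rightarrow> complex" where
  "qderiv q h x = (if x = 0 then deriv h 0
                   else (h x - h (complex_of_real q * x)) / (complex_of_real (1 - q) * x))"

definition qderivs :: "real \<Rightarrow> nat \<Rightarrow> (complex \<Rightarrow> complex) \<Rightarrow> complex \<Rightarrow> complex" where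
  "qderivs q e h = (qderiv q ^^ e) h"

definition qderivs_defined :: "real \<Rightarrow> complex set \<Rightarrow> (complex \<Rightarrow> complex) \<Rightarrow> nat \<Rightarrow> complex \<Rightarrow> bool" where
  "qderivs_defined q D h e x \<longleftrightarrow>
     (if x = 0 then (\<exists>r > 0. ball 0 r \<subseteq> D \<and> h holomorphic_on ball 0 r)
      else (\<forall>j \<le> e. complex_of_real (q ^ j) * x \<in> D))"

definition qconv_term :: "real \<Rightarrow> real \<Rightarrow> (complex \<Rightarrow> complex) \<Rightarrow> (complex \<Rightarrow> complex) \<Rightarrow> complex \<Rightarrow> nat \<Rightarrow> complex" where
  "qconv_term q \<gamma> f h x e = (-1) ^ e * qmoment q \<gamma> f e / complex_of_real (qfact q e) * qderivs q e h x"

definition qconv_defined :: "real \<Rightarrow> real \<Rightarrow> (complex \<Rightarrow> complex) \<Rightarrow> complex set \<Rightarrow> (complex \<Rightarrow> complex) \<Rightarrow> complex \<Rightarrow> bool" where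
  "qconv_defined q \<gamma> f D h x \<longleftrightarrow>
     (\<forall>e. qderivs_defined q D h e x) \<and> summable (\<lambda>e. norm (qconv_term q \<gamma> f h x e))"

definition qconv :: "real \<Rightarrow> real \<Rightarrow> (complex \<Rightarrow> complex) \<Rightarrow> (complex \<Rightarrow> complex) \<Rightarrow> complex \<Rightarrow> complex" where
  "qconv q \<gamma> f h x = suminf (qconv_term q \<gamma> f h x)"

definition qconv_zero :: "real \<Rightarrow> real \<Rightarrow> (complex \<Rightarrow> complex) \<Rightarrow> complex set \<Rightarrow> (complex \<Rightarrow> complex) \<Rightarrow> bool" where
  "qconv_zero q \<gamma> f D h \<longleftrightarrow> (\<forall>x. qconv_defined q \<gamma> f D h x \<longrightarrow> qconv q \<gamma> f h x = 0)"

end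

theory Submission imports Defs begin

definition ptl :: "real \<Rightarrow> real \<Rightarrow> int \<Rightarrow> real \<Rightarrow> complex" where
  "ptl q c k \<epsilon> = complex_of_real (\<epsilon> * q powi k * c)"

lemma qint_summand_ptl: "qint_summand q c F (k, \<epsilon>) = complex_of_real (q powi k * c) * F (ptl q c k \<epsilon>)"
  by (simp add: qint_summand_def ptl_def)

lemma geom_int_summable:
  fixes q :: real assumes "0 < q" "q < 1"
  shows "(\<lambda>k::int. q ^ nat \<bar>k\<bar>) summable_on UNIV"
proof -
  have g: "(\<lambda>n::nat. q ^ n) summable_on UNIV"
    using assms by (subst summable_on_UNIV_nonneg_real_iff) (auto intro: summable_geometric)
  have U: "(UNIV::int set) = range int \<union> range (\<lambda>n. - int n - 1)"
  proof -
    have "k \<in> range int \<union> range (\<lambda>n. - int n - 1)" for k :: int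
    proof (cases "k \<ge> 0")
      case True then show ?thesis by (auto intro: image_eqI[where x="nat k"])
    next
      case False then show ?thesis by (auto intro!: image_eqI[where x="nat (-k-1)"])
    qed
    then show ?thesis by auto
  qed
  have 1: "(\<lambda>k::int. q ^ nat \<bar>k\<bar>) summable_on range int"
    by (subst summable_on_reindex) (auto simp: o_def g)
  have 2: "(\<lambda>k::int. q ^ nat \<bar>k\<bar>) summable_on range (\<lambda>n. - int n - 1)"
  proof (subst summable_on_reindex)
    show "inj_on (\<lambda>n. - int n - 1) UNIV" by (auto simp: inj_on_def)
    have "(\<lambda>n. q * q ^ n) summable_on UNIV" using g by (rule summable_on_cmult_right)
    then show "((\<lambda>k::int. q ^ nat \<bar>k\<bar>) \<circ> (\<lambda>n. - int n - 1)) summable_on UNIV"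
      by (simp add: o_def nat_add_distrib)
  qed
  show ?thesis using summable_on_union[OF 1 2] U by simp
qed


locale qs =
  fixes q c :: real
  assumes q0: "0 < q" and q1: "q < 1" and c0: "0 < c"
begin

abbreviation "I \<equiv> (UNIV::int set) \<times> {-1, 1::real}"
abbreviation "pt \<equiv> ptl q c"

lemma alg1:
  fixes w P Hp Hq L Q r :: complex
  assumes "P \<noteq> 0" "L \<noteq> 0" "r \<noteq> 0" "Q = r ^ Suc j"
  shows "w * ((Hp - Hq) / (L * P) * P ^ Suc j) = w * (Hp * P ^ j) * (1/L) + (r * w) * (Hq * (r * P) ^ j) * (- 1/(Q*L))"
proof -
  have a: "(Hp - Hq) / (L * P) * P ^ Suc j = (Hp - Hq) * P ^ j / L" using assms(1) by (simp add: divide_simps)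
  have b: "(r * w) * (Hq * (r * P) ^ j) * (- 1/(Q*L)) = - (w * Hq * P^j / L)"
    using assms(2,3) unfolding assms(4) power_mult_distrib by (simp add: divide_simps)
  show ?thesis unfolding a b using assms(2) by (simp add: field_simps)
qed

lemma powi_pos: "q powi k > 0"
  using q0 by simp

lemma pt_succ: "pt (k+1) \<epsilon> = of_real q * pt k \<epsilon>"
  using q0 by (simp add: ptl_def power_int_add)

lemma pt_add_nat: "of_real (q^j) * pt k \<epsilon> = pt (k + int j) \<epsilon>"
  using q0 by (simp add: ptl_def power_int_add)

lemma norm_pt: "\<epsilon> \<in> {-1,1} \<Longrightarrow> norm (pt k \<epsilon>) = q powi k * c"
  using q0 c0 by (simp only: ptl_def norm_of_real) (auto simp: abs_mult)

lemma pt_nz: "\<epsilon> \<in> {-1,1} \<Longrightarrow> pt k \<epsilon> \<noteq> 0"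
  using norm_pt[of \<epsilon> k] powi_pos[of k] c0 by auto

lemma pt_qlat: "\<epsilon> \<in> {-1,1} \<Longrightarrow> pt k \<epsilon> \<in> qlat q c"
  unfolding qlat_def ptl_def by blast

lemma powi_nonneg_eq: "k \<ge> 0 \<Longrightarrow> q powi k = q ^ nat \<bar>k\<bar>"
proof -
  assume "k \<ge> 0"
  then obtain n where "k = int n" using nonneg_int_cases by blast
  then show ?thesis by simp
qed

lemma powi_neg_eq: "k < 0 \<Longrightarrow> inverse (q powi k) = q ^ nat \<bar>k\<bar>"
proof -
  assume "k < 0"
  then obtain n where n: "k = - int n" by (metis minus_minus nonneg_int_cases neg_0_le_iff_le less_imp_le)
  then have "q powi k = inverse (q ^ n)" by (simp add: power_int_minus)
  then show ?thesis using n by simp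
qed

lemma card_pm: "card {-1, 1::real} = 2"
  by (subst card_insert_disjoint) auto

lemma sum_pm: "(\<Sum>\<epsilon>\<in>{-1,1::real}. f \<epsilon>) = f (-1) + f 1"
  by simp

lemma lat_geom_summable: "(\<lambda>x. K * q ^ nat \<bar>fst x\<bar>) summable_on I"
proof -
  have "(\<lambda>x. q ^ nat \<bar>fst x\<bar>) summable_on I"
  proof (rule summable_on_SigmaI[where g = "\<lambda>k. 2 * q ^ nat \<bar>k\<bar>"])
    fix k :: int
    show "((\<lambda>\<epsilon>. q ^ nat \<bar>fst (k, \<epsilon>)\<bar>) has_sum (2 * q ^ nat \<bar>k\<bar>)) {-1,1::real}"
      by (rule has_sum_finiteI) (use card_pm in simp_all)
    show "(\<lambda>k. 2 * q ^ nat \<bar>k\<bar>) summable_on UNIV"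
      using geom_int_summable[OF q0 q1] by (rule summable_on_cmult_right)
  qed (use q0 in auto)
  then show ?thesis by (rule summable_on_cmult_right)
qed

lemma lat_summable:
  fixes u :: "int \<times> real \<Rightarrow> 'a::banach"
  assumes "\<And>k \<epsilon>. \<epsilon> \<in> {-1,1} \<Longrightarrow> norm (u (k,\<epsilon>)) \<le> K * q ^ nat \<bar>k\<bar>"
  shows "(\<lambda>x. norm (u x)) summable_on I" "u summable_on I"
proof -
  show *: "(\<lambda>x. norm (u x)) summable_on I"
    using lat_geom_summable[of K] by (rule Infinite_Sum.abs_summable_on_comparison_test') (use assms in auto)
  show "u summable_on I" using * by (rule abs_summable_summable)
qed

lemma lat_swap:
  fixes u :: "int \<times> real \<Rightarrow> nat \<Rightarrow> complex"
  assumes b: "\<And>k \<epsilon> e. \<epsilon> \<in> {-1,1} \<Longrightarrow> norm (u (k,\<epsilon>) e) \<le> \<alpha> e * (K * q ^ nat \<bar>k\<bar>)"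
    and sa: "\<alpha> summable_on UNIV" and a0: "\<And>e. \<alpha> e \<ge> 0" and K0: "K \<ge> 0"
  shows "infsum (\<lambda>x. infsum (u x) UNIV) I = infsum (\<lambda>e. infsum (\<lambda>x. u x e) I) UNIV"
proof -
  have "(\<lambda>(x,e). \<alpha> e * (K * q ^ nat \<bar>fst x\<bar>)) summable_on I \<times> UNIV"
  proof (rule summable_on_SigmaI[where g = "\<lambda>x. infsum \<alpha> UNIV * (K * q ^ nat \<bar>fst x\<bar>)"])
    fix x :: "int \<times> real"
    show "((\<lambda>e. (\<lambda>(x, e). \<alpha> e * (K * q ^ nat \<bar>fst x\<bar>)) (x, e)) has_sum
          infsum \<alpha> UNIV * (K * q ^ nat \<bar>fst x\<bar>)) UNIV"
      using has_sum_cmult_left[OF has_sum_infsum[OF sa]] by simp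
    show "(\<lambda>x. infsum \<alpha> UNIV * (K * q ^ nat \<bar>fst x\<bar>)) summable_on I"
      using lat_geom_summable[of K] by (rule summable_on_cmult_right)
  qed (use a0 K0 q0 in auto)
  then have "(\<lambda>y. norm ((\<lambda>(x,e). u x e) y)) summable_on I \<times> UNIV"
    by (rule Infinite_Sum.abs_summable_on_comparison_test') (use b in auto)
  then have "(\<lambda>(x,e). u x e) summable_on I \<times> UNIV"
    by (rule abs_summable_summable)
  then show ?thesis by (rule infsum_swap_banach)
qed

lemma bij_shift: "bij_betw (\<lambda>x. (fst x + 1, snd x)) I I"
  by (rule bij_betwI[where g = "\<lambda>x. (fst x - 1, snd x)"]) auto

lemma bij_shift_int: "bij_betw (\<lambda>k::int. k + 1) UNIV UNIV"
  by (rule bij_betwI[where g = "\<lambda>k. k - 1"]) auto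

lemma lat_ibp:
  assumes rel: "\<And>k \<epsilon>. \<epsilon> \<in> {-1,1} \<Longrightarrow>
      H' (pt k \<epsilon>) = (H (pt k \<epsilon>) - H (pt (k+1) \<epsilon>)) / (of_real (1-q) * pt k \<epsilon>)"
    and sH: "qint_summand q c (\<lambda>x. H x * x^j) summable_on I"
  shows "infsum (qint_summand q c (\<lambda>x. H' x * x^Suc j)) I =
         of_real ((1 - 1/q^Suc j)/(1-q)) * infsum (qint_summand q c (\<lambda>x. H x * x^j)) I"
proof -
  define u where "u = qint_summand q c (\<lambda>x. H x * x^j)"
  define Q where "Q = complex_of_real (q^Suc j)"
  define L where "L = complex_of_real (1-q)"
  have Q0: "Q \<noteq> 0" using q0 by (simp add: Q_def)
  have L0: "L \<noteq> 0" using q1 by (simp add: L_def)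
  have tm: "qint_summand q c (\<lambda>x. H' x * x^Suc j) x = u x * (1/L) + u (fst x + 1, snd x) * (- 1/(Q*L))"
    if "x \<in> I" for x
  proof -
    obtain k \<epsilon> where x: "x = (k,\<epsilon>)" and e: "\<epsilon> \<in> {-1,1}" using \<open>x \<in> I\<close> by auto
    have ne: "pt k \<epsilon> \<noteq> 0" using pt_nz[OF e] .
    have w1: "complex_of_real (q powi (k+1) * c) = of_real q * of_real (q powi k * c)"
      using q0 by (simp add: power_int_add)
    have rq: "complex_of_real q \<noteq> 0" using q0 by simp
    have Qeq: "Q = complex_of_real q ^ Suc j" by (simp add: Q_def)
    have "qint_summand q c (\<lambda>x. H' x * x^Suc j) x = of_real (q powi k * c) *
       ((H (pt k \<epsilon>) - H (of_real q * pt k \<epsilon>)) / (L * pt k \<epsilon>) * pt k \<epsilon> ^ Suc j)"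
      unfolding x qint_summand_ptl rel[OF e] pt_succ L_def ..
    also have "\<dots> = of_real (q powi k * c) * (H (pt k \<epsilon>) * pt k \<epsilon> ^ j) * (1/L) +
        (of_real q * of_real (q powi k * c)) * (H (of_real q * pt k \<epsilon>) * (of_real q * pt k \<epsilon>) ^ j) * (- 1/(Q*L))"
      by (rule alg1[OF ne L0 rq Qeq])
    also have "\<dots> = u x * (1/L) + u (fst x + 1, snd x) * (- 1/(Q*L))"
      unfolding x u_def qint_summand_ptl fst_conv snd_conv w1 pt_succ ..
    finally show ?thesis .
  qed
  have sU: "u summable_on I" using sH by (simp add: u_def)
  have sU2: "((\<lambda>x. u (fst x + 1, snd x)) has_sum infsum u I) I"
    using has_sum_reindex_bij_betw[OF bij_shift, of u] has_sum_infsum[OF sU] by simp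
  have "((\<lambda>x. u x * (1/L) + u (fst x + 1, snd x) * (- 1/(Q*L))) has_sum
        (infsum u I * (1/L) + infsum u I * (- 1/(Q*L)))) I"
    by (intro has_sum_add has_sum_cmult_left has_sum_infsum sU sU2)
  then have "(qint_summand q c (\<lambda>x. H' x * x^Suc j) has_sum
        (infsum u I * (1/L) + infsum u I * (- 1/(Q*L)))) I"
    by (simp only: has_sum_cong[OF tm])
  then have "infsum (qint_summand q c (\<lambda>x. H' x * x^Suc j)) I = infsum u I * (1/L) + infsum u I * (- 1/(Q*L))"
    by (rule infsumI)
  also have "\<dots> = ((1 - 1/Q)/L) * infsum u I"
    using Q0 L0 by (simp add: field_simps)
  also have "(1 - 1/Q)/L = of_real ((1 - 1/q^Suc j)/(1-q))"
    by (simp add: Q_def L_def)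
  finally show ?thesis by (simp add: u_def)
qed

lemma lat_zero:
  assumes rel: "\<And>k \<epsilon>. \<epsilon> \<in> {-1,1} \<Longrightarrow>
      H' (pt k \<epsilon>) = (H (pt k \<epsilon>) - H (pt (k+1) \<epsilon>)) / (of_real (1-q) * pt k \<epsilon>)"
    and sH': "qint_summand q c (\<lambda>x. H' x * x^0) summable_on I"
    and sV: "(\<lambda>k. H (pt k 1) - H (pt k (-1))) summable_on UNIV"
  shows "infsum (qint_summand q c (\<lambda>x. H' x * x^0)) I = 0"
proof -
  define \<phi> where "\<phi> = qint_summand q c (\<lambda>x. H' x * x^0)"
  define V where "V = (\<lambda>k. H (pt k 1) - H (pt k (-1)))"
  define L where "L = complex_of_real (1-q)"
  have L0: "L \<noteq> 0" using q1 by (simp add: L_def)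
  have phi: "\<phi> (k,\<epsilon>) = of_real \<epsilon> * (H (pt k \<epsilon>) - H (pt (k+1) \<epsilon>)) / L" if e: "\<epsilon> \<in> {-1,1}" for k \<epsilon>
  proof -
    have ne: "pt k \<epsilon> \<noteq> 0" using pt_nz[OF e] .
    have "complex_of_real (q powi k * c) = of_real \<epsilon> * pt k \<epsilon>"
      using e by (auto simp: ptl_def)
    then show ?thesis
      unfolding \<phi>_def qint_summand_ptl rel[OF e] using ne L0
      by (simp add: L_def field_simps)
  qed
  have "infsum \<phi> I = infsum (\<lambda>k. infsum (\<lambda>\<epsilon>. \<phi> (k,\<epsilon>)) {-1,1}) UNIV"
    by (rule infsum_Sigma_banach[symmetric]) (use sH' in \<open>simp add: \<phi>_def\<close>)
  also have "\<dots> = infsum (\<lambda>k. V k * (1/L) + V (k+1) * (-1/L)) UNIV"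
  proof (rule infsum_cong)
    fix k :: int
    have "infsum (\<lambda>\<epsilon>. \<phi> (k,\<epsilon>)) {-1,1} = \<phi> (k,-1) + \<phi> (k,1)" by simp
    also have "\<dots> = V k * (1/L) + V (k+1) * (-1/L)"
      using L0 by (simp add: phi V_def field_simps)
    finally show "infsum (\<lambda>\<epsilon>. \<phi> (k,\<epsilon>)) {-1,1} = V k * (1/L) + V (k+1) * (-1/L)" .
  qed
  also have "\<dots> = infsum V UNIV * (1/L) + infsum V UNIV * (-1/L)"
  proof (rule infsumI, intro has_sum_add has_sum_cmult_left)
    show "(V has_sum infsum V UNIV) UNIV" using sV by (simp add: V_def)
    show "((\<lambda>k. V (k+1)) has_sum infsum V UNIV) UNIV"
      using has_sum_reindex_bij_betw[OF bij_shift_int, of V] sV by (simp add: V_def)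
  qed
  also have "\<dots> = 0" by (simp add: field_simps)
  finally show ?thesis unfolding \<phi>_def .
qed

end


fun Pq :: "real \<Rightarrow> nat \<Rightarrow> nat \<Rightarrow> real" where
  "Pq q n 0 = 1"
| "Pq q n (Suc e) = Pq q n e * ((1 - q ^ (n + e + 1)) / (1 - q))"

lemma Pq_prod: "Pq q n e = (\<Prod>i<e. (1 - q ^ (n + i + 1)) / (1 - q))"
  by (induction e) simp_all

lemma Pq_shift: "Pq q (Suc n) e * ((1 - q ^ Suc n) / (1 - q)) = Pq q n (Suc e)"
  unfolding Pq_prod prod.lessThan_Suc_shift by (simp add: mult.commute)

lemma Pq_bounds:
  assumes "0 < q" "q < 1"
  shows "0 \<le> Pq q n e \<and> Pq q n e \<le> (1/(1-q))^e"
proof (induction e)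
  case 0 then show ?case by simp
next
  case (Suc e)
  have "q ^ (n + e + 1) \<le> 1" using assms by (intro power_le_one) auto
  define X where "X = (1 - q ^ (n + e + 1)) / (1 - q)"
  have h0: "0 \<le> X" using assms \<open>q ^ (n + e + 1) \<le> 1\<close> by (simp add: X_def)
  have h1: "X \<le> 1/(1-q)"
    using assms by (simp add: X_def divide_right_mono)
  have eq: "Pq q n (Suc e) = Pq q n e * X" by (simp add: X_def)
  have "Pq q n e * X \<le> (1/(1-q))^e * (1/(1-q))" by (rule mult_mono) (use Suc h0 h1 in auto)
  then show ?case unfolding eq power_Suc2 using Suc h0 by simp
qed

definition qderivsD :: "real \<Rightarrow> (complex \<Rightarrow> complex) \<Rightarrow> nat \<Rightarrow> complex \<Rightarrow> complex" where
  "qderivsD q g e = qderivs q e g"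

lemma qderivsD_0: "qderivsD q g 0 = g"
  by (simp add: qderivsD_def qderivs_def)

lemma qderivsD_Suc: "x \<noteq> 0 \<Longrightarrow> qderivsD q g (Suc e) x =
   (qderivsD q g e x - qderivsD q g e (of_real q * x)) / (of_real (1-q) * x)"
  by (simp add: qderivsD_def qderivs_def qderiv_def)

locale gs = qs +
  fixes g F :: "complex \<Rightarrow> complex" and r :: real
  assumes rc: "c < r" and Fh: "F holomorphic_on ball 0 r"
    and Fg: "\<And>x. x \<in> qlat q c \<inter> ball 0 r \<Longrightarrow> F x = g x"
    and gI: "I_inf q c g"
begin

definition "a n = (deriv ^^ n) F 0 / fact n"
definition "G e x = (\<Sum>n. a (n+e) * of_real (Pq q n e) * x^n)"
abbreviation "D \<equiv> qderivsD q g"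
definition "S = (\<Sum>n. norm (a n) * c^n)"
definition "B = 1/((1-q)*c)"

lemma a_sums: "norm w < r \<Longrightarrow> (\<lambda>n. a n * w^n) sums F w"
  using holomorphic_power_series[OF Fh, of w] by (simp add: a_def)

lemma S_summable: "summable (\<lambda>n. norm (a n) * c^n)"
proof -
  have w: "norm (complex_of_real ((c+r)/2)) < r" unfolding norm_of_real using rc c0 by simp
  have "summable (\<lambda>n. a n * (of_real ((c+r)/2))^n)"
    by (rule sums_summable[OF a_sums[OF w]])
  moreover have "norm (complex_of_real c) < norm (complex_of_real ((c+r)/2))"
    unfolding norm_of_real using rc c0 by simp
  ultimately have "summable (\<lambda>n. norm (a n * (complex_of_real c)^n))"
    by (rule powser_insidea)
  then show ?thesis using c0 by (simp add: norm_mult norm_power)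
qed

lemma B_pos: "B > 0" using q1 c0 by (simp add: B_def)

lemma T_summable: "summable (\<lambda>n. norm (a (n+e)) * Pq q n e * c^n)"
  and T_bound: "(\<Sum>n. norm (a (n+e)) * Pq q n e * c^n) \<le> B^e * S"
proof -
  have s1: "summable (\<lambda>n. norm (a (n+e)) * c^(n+e))"
    using summable_ignore_initial_segment[OF S_summable, of e] by simp
  define K where "K = (1/(1-q))^e / c^e"
  have K0: "K \<ge> 0" using q1 c0 by (simp add: K_def)
  have tb: "norm (a (n+e)) * Pq q n e * c^n \<le> K * (norm (a (n+e)) * c^(n+e))" for n
  proof -
    have "norm (a (n+e)) * Pq q n e * c^n \<le> norm (a (n+e)) * (1/(1-q))^e * c^n"
      using Pq_bounds[OF q0 q1, of n e] c0 by (intro mult_right_mono mult_left_mono) auto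
    also have "\<dots> = K * (norm (a (n+e)) * c^(n+e))"
      using c0 by (simp add: K_def power_add field_simps)
    finally show ?thesis .
  qed
  have nn: "0 \<le> norm (a (n+e)) * Pq q n e * c^n" for n
    using Pq_bounds[OF q0 q1, of n e] c0 by simp
  show sT: "summable (\<lambda>n. norm (a (n+e)) * Pq q n e * c^n)"
    by (rule summable_comparison_test'[where g="\<lambda>n. K * (norm (a (n+e)) * c^(n+e))"])
       (use s1 tb nn in \<open>auto intro: summable_mult\<close>)
  have "(\<Sum>n. norm (a (n+e)) * Pq q n e * c^n) \<le> (\<Sum>n. K * (norm (a (n+e)) * c^(n+e)))"
    by (rule suminf_le) (use tb sT s1 in \<open>auto intro: summable_mult\<close>)
  also have "\<dots> = K * (\<Sum>n. norm (a (n+e)) * c^(n+e))"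
    using s1 by (rule suminf_mult)
  also have "(\<Sum>n. norm (a (n+e)) * c^(n+e)) \<le> S"
  proof -
    have "S = (\<Sum>n. norm (a (n+e)) * c^(n+e)) + (\<Sum>i<e. norm (a i) * c^i)"
      unfolding S_def by (rule suminf_split_initial_segment[OF S_summable])
    moreover have "(\<Sum>i<e. norm (a i) * c^i) \<ge> 0" using c0 by (auto intro: sum_nonneg)
    ultimately show ?thesis by linarith
  qed
  then have "K * (\<Sum>n. norm (a (n+e)) * c^(n+e)) \<le> K * S" using K0 by (rule mult_left_mono)
  also have "K * S = B^e * S"
  proof -
    have "B = (1/(1-q))/c" by (simp add: B_def)
    moreover have "K = ((1/(1-q))/c)^e" by (simp only: K_def power_divide)
    ultimately have "K = B^e" by simp
    then show ?thesis by simp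
  qed
  finally show "(\<Sum>n. norm (a (n+e)) * Pq q n e * c^n) \<le> B^e * S" by simp
qed

lemma term_le: "norm x \<le> c \<Longrightarrow> norm (a (n+e) * of_real (Pq q n e) * x^n) \<le> norm (a (n+e)) * Pq q n e * c^n"
  using Pq_bounds[OF q0 q1, of n e]
  by (auto simp: norm_mult norm_power intro!: mult_left_mono power_mono)

lemma G_summable: "norm x \<le> c \<Longrightarrow> summable (\<lambda>n. norm (a (n+e) * of_real (Pq q n e) * x^n))"
  by (rule summable_comparison_test'[OF T_summable]) (use term_le in auto)

lemma G_bound: "norm x \<le> c \<Longrightarrow> norm (G e x) \<le> B^e * S"
proof -
  assume x: "norm x \<le> c"
  have "norm (G e x) \<le> (\<Sum>n. norm (a (n+e) * of_real (Pq q n e) * x^n))"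
    unfolding G_def by (rule summable_norm[OF G_summable[OF x]])
  also have "\<dots> \<le> (\<Sum>n. norm (a (n+e)) * Pq q n e * c^n)"
    by (rule suminf_le) (use term_le[OF x] G_summable[OF x] T_summable in auto)
  also have "\<dots> \<le> B^e * S" by (rule T_bound)
  finally show ?thesis .
qed

lemma G_odd: "norm x \<le> c \<Longrightarrow> norm (G e x - G e (-x)) \<le> 2 * (norm x / c) * (B^e * S)"
proof -
  assume x: "norm x \<le> c"
  have x': "norm (-x) \<le> c" using x by simp
  have sx: "summable (\<lambda>n. a (n+e) * of_real (Pq q n e) * x^n)"
    using G_summable[OF x] by (rule summable_norm_cancel)
  have smx: "summable (\<lambda>n. a (n+e) * of_real (Pq q n e) * (-x)^n)"
    using G_summable[OF x'] by (rule summable_norm_cancel)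
  have eq: "G e x - G e (-x) = (\<Sum>n. a (n+e) * of_real (Pq q n e) * x^n - a (n+e) * of_real (Pq q n e) * (-x)^n)"
    unfolding G_def using suminf_diff[OF sx smx] by simp
  have tb: "norm (a (n+e) * of_real (Pq q n e) * x^n - a (n+e) * of_real (Pq q n e) * (-x)^n)
        \<le> 2 * (norm x / c) * (norm (a (n+e)) * Pq q n e * c^n)" for n
  proof (cases n)
    case 0 then show ?thesis using c0 Pq_bounds[OF q0 q1, of n e] by simp
  next
    case (Suc m)
    have "norm (x^n - (-x)^n) \<le> norm (x^n) + norm ((-x)^n)" by (rule norm_triangle_ineq4)
    also have "\<dots> = 2 * (norm x * norm x ^ m)" by (simp add: Suc norm_power norm_mult)
    also have "\<dots> \<le> 2 * (norm x * c^m)"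
      using x by (intro mult_left_mono power_mono) auto
    also have "\<dots> = 2 * (norm x / c) * c^n" using c0 by (simp add: Suc)
    finally have h: "norm (x^n - (-x)^n) \<le> 2 * (norm x / c) * c^n" .
    have "norm (a (n+e) * of_real (Pq q n e) * x^n - a (n+e) * of_real (Pq q n e) * (-x)^n)
        = norm (a (n+e)) * Pq q n e * norm (x^n - (-x)^n)"
      using Pq_bounds[OF q0 q1, of n e]
      by (simp add: norm_mult right_diff_distrib[symmetric] mult.assoc)
    also have "\<dots> \<le> norm (a (n+e)) * Pq q n e * (2 * (norm x / c) * c^n)"
      using h Pq_bounds[OF q0 q1, of n e] by (intro mult_left_mono) auto
    finally show ?thesis by (simp add: algebra_simps)
  qed
  have sR: "summable (\<lambda>n. 2 * (norm x / c) * (norm (a (n+e)) * Pq q n e * c^n))"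
    using T_summable by (rule summable_mult)
  have "norm (G e x - G e (-x)) \<le> (\<Sum>n. 2 * (norm x / c) * (norm (a (n+e)) * Pq q n e * c^n))"
    unfolding eq by (rule norm_suminf_le) (use tb sR in auto)
  also have "\<dots> = 2 * (norm x / c) * (\<Sum>n. norm (a (n+e)) * Pq q n e * c^n)"
    using T_summable by (rule suminf_mult)
  also have "\<dots> \<le> 2 * (norm x / c) * (B^e * S)"
    using T_bound c0 by (intro mult_left_mono) auto
  finally show ?thesis .
qed


lemma G_step:
  assumes x0: "x \<noteq> 0" and xc: "norm x \<le> c"
  shows "(G e x - G e (of_real q * x)) / (of_real (1-q) * x) = G (Suc e) x"
proof -
  have xc': "norm (of_real q * x) \<le> c"
    using xc q0 q1 by (simp add: norm_mult) (smt (verit) mult_left_le_one_le norm_ge_zero)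
  define t where "t = (\<lambda>n. a (n+e) * of_real (Pq q n e) * x^n)"
  define t' where "t' = (\<lambda>n. a (n+e) * of_real (Pq q n e) * (of_real q * x)^n)"
  define b where "b = (\<lambda>n. t n - t' n)"
  have st: "summable t" unfolding t_def by (rule summable_norm_cancel[OF G_summable[OF xc]])
  have st': "summable t'" unfolding t'_def by (rule summable_norm_cancel[OF G_summable[OF xc']])
  have sb: "summable b" unfolding b_def using st st' by (rule summable_diff)
  have "G e x - G e (of_real q * x) = suminf b"
    unfolding b_def G_def using suminf_diff[OF st st'] by (simp add: t_def t'_def)
  also have "\<dots> = (\<Sum>n. b (Suc n))"
    using suminf_split_head[OF sb] by (simp add: b_def t_def t'_def)
  also have "\<dots> = (\<Sum>n. (of_real (1-q) * x) * (a (n + Suc e) * of_real (Pq q n (Suc e)) * x^n))"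
  proof (rule arg_cong[where f=suminf], rule ext)
    fix n
    have ps: "Pq q (Suc n) e * (1 - q ^ Suc n) = (1-q) * Pq q n (Suc e)"
      unfolding Pq_shift[of q n e, symmetric] using q1 by (simp del: Pq.simps add: field_simps)
    have ps': "of_real (Pq q (Suc n) e) * (1 - of_real q ^ Suc n) = (of_real (1-q) * of_real (Pq q n (Suc e)) :: complex)"
      using arg_cong[OF ps, of complex_of_real] by simp
    have "b (Suc n) = a (Suc n + e) * (of_real (Pq q (Suc n) e) * (1 - of_real q ^ Suc n)) * x ^ Suc n"
      by (simp add: b_def t_def t'_def power_mult_distrib algebra_simps)
    also have "\<dots> = (of_real (1-q) * x) * (a (n + Suc e) * of_real (Pq q n (Suc e)) * x^n)"
      unfolding ps' by (simp add: algebra_simps)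
    finally show "b (Suc n) = (of_real (1-q) * x) * (a (n + Suc e) * of_real (Pq q n (Suc e)) * x^n)" .
  qed
  also have "\<dots> = (of_real (1-q) * x) * G (Suc e) x"
    unfolding G_def by (rule suminf_mult[OF summable_norm_cancel[OF G_summable[OF xc]]])
  finally show ?thesis using x0 q1 by simp
qed

lemma powi_le1: "k \<ge> 0 \<Longrightarrow> q powi k \<le> 1"
  using powi_nonneg_eq[of k] q0 q1 by (simp add: power_le_one)

lemma powi_ge1: "k < 0 \<Longrightarrow> q powi k \<ge> 1"
proof -
  assume k: "k < 0"
  have "inverse (q powi k) \<le> 1" using powi_neg_eq[OF k] q0 q1 by (simp add: power_le_one)
  then show ?thesis using powi_pos[of k] by (simp add: field_simps)
qed

lemma D_small: "k \<ge> 0 \<Longrightarrow> \<epsilon> \<in> {-1,1} \<Longrightarrow> D e (pt k \<epsilon>) = G e (pt k \<epsilon>)"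
proof (induction e arbitrary: k)
  case 0
  have nc: "norm (pt k \<epsilon>) \<le> c" using norm_pt[OF 0(2)] powi_le1[OF 0(1)] c0 powi_pos[of k]
    by (simp add: mult_left_le_one_le)
  have "pt k \<epsilon> \<in> qlat q c \<inter> ball 0 r" using pt_qlat[OF 0(2)] nc rc by auto
  then have "g (pt k \<epsilon>) = F (pt k \<epsilon>)" using Fg by simp
  also have "\<dots> = (\<Sum>n. a n * (pt k \<epsilon>)^n)" using a_sums[of "pt k \<epsilon>"] nc rc by (simp add: sums_iff)
  also have "\<dots> = G 0 (pt k \<epsilon>)" by (simp add: G_def)
  finally show ?case by (simp add: qderivsD_0)
next
  case (Suc e)
  have nc: "norm (pt k \<epsilon>) \<le> c" using norm_pt[OF Suc(3)] powi_le1[OF Suc(2)] c0 powi_pos[of k]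
    by (simp add: mult_left_le_one_le)
  have "D (Suc e) (pt k \<epsilon>) = (D e (pt k \<epsilon>) - D e (pt (k+1) \<epsilon>)) / (of_real (1-q) * pt k \<epsilon>)"
    using qderivsD_Suc[OF pt_nz[OF Suc(3)]] pt_succ by simp
  also have "\<dots> = (G e (pt k \<epsilon>) - G e (of_real q * pt k \<epsilon>)) / (of_real (1-q) * pt k \<epsilon>)"
    using Suc.IH[of k] Suc.IH[of "k+1"] Suc(2,3) pt_succ by simp
  also have "\<dots> = G (Suc e) (pt k \<epsilon>)" by (rule G_step[OF pt_nz[OF Suc(3)] nc])
  finally show ?case .
qed

lemma D_rel: "\<epsilon> \<in> {-1,1} \<Longrightarrow> D (Suc e) (pt k \<epsilon>) = (D e (pt k \<epsilon>) - D e (pt (k+1) \<epsilon>)) / (of_real (1-q) * pt k \<epsilon>)"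
  using qderivsD_Suc[OF pt_nz] pt_succ by simp

definition "om t k = (if k < 0 then (q powi k)^t else 1)"

lemma om_succ: "k < 0 \<Longrightarrow> om t (k+1) = (q powi k)^t * q^t"
proof -
  assume k: "k < 0"
  have "om t (k+1) = (q powi (k+1))^t"
  proof (cases "k+1 < 0")
    case False then have "k+1 = 0" using k by linarith
    then show ?thesis by (simp add: om_def)
  qed (simp add: om_def)
  also have "\<dots> = (q powi k)^t * q^t" using q0 by (simp add: power_int_add power_mult_distrib)
  finally show ?thesis .
qed

lemma elem_le_infsum:
  fixes f :: "'b \<Rightarrow> real"
  assumes "f summable_on A" "x \<in> A" "\<And>y. y \<in> A \<Longrightarrow> f y \<ge> 0"
  shows "f x \<le> infsum f A"
proof -
  have "infsum f {x} \<le> infsum f A"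
    by (rule infsum_mono_neutral) (use assms in auto)
  then show ?thesis by simp
qed

lemma g_decay: "\<exists>Z. \<forall>k \<epsilon>. k < 0 \<longrightarrow> \<epsilon> \<in> {-1,1} \<longrightarrow> norm (g (pt k \<epsilon>)) * (q powi k)^t \<le> Z"
proof -
  define f where "f = (\<lambda>p. norm (qint_summand q c (\<lambda>x. g x * x^t) p))"
  have sf: "f summable_on I" using gI unfolding I_inf_def qintegrable_def f_def by blast
  have "norm (g (pt k \<epsilon>)) * (q powi k)^t \<le> infsum f I / c^(t+1)" if k: "k < 0" and e: "\<epsilon> \<in> {-1,1}" for k \<epsilon>
  proof -
    have y1: "q powi k \<ge> 1" by (rule powi_ge1[OF k])
    have fe: "f (k,\<epsilon>) = c^(t+1) * (norm (g (pt k \<epsilon>)) * (q powi k)^t) * q powi k"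
      unfolding f_def qint_summand_ptl norm_mult norm_of_real norm_power norm_pt[OF e]
      using q0 c0 by (simp add: abs_mult power_mult_distrib)
    have "c^(t+1) * (norm (g (pt k \<epsilon>)) * (q powi k)^t) \<le> c^(t+1) * (norm (g (pt k \<epsilon>)) * (q powi k)^t) * q powi k"
    proof -
      have X0: "0 \<le> c^(t+1) * (norm (g (pt k \<epsilon>)) * (q powi k)^t)" using c0 powi_pos[of k] by simp
      show ?thesis using mult_left_mono[OF y1 X0] by simp
    qed
    also have "\<dots> \<le> infsum f I" unfolding fe[symmetric]
      by (rule elem_le_infsum[OF sf]) (use e in \<open>auto simp: f_def\<close>)
    finally show ?thesis using c0 by (simp add: field_simps)
  qed
  then show ?thesis by blast
qed

lemma D_bound: "\<exists>C A. 0 \<le> C \<and> 0 < A \<and> (\<forall>e k \<epsilon>. \<epsilon> \<in> {-1,1} \<longrightarrow> norm (D e (pt k \<epsilon>)) * om t k \<le> C * A^e)"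
proof -
  obtain Z where Z: "\<And>k \<epsilon>. k < 0 \<Longrightarrow> \<epsilon> \<in> {-1,1} \<Longrightarrow> norm (g (pt k \<epsilon>)) * (q powi k)^t \<le> Z"
    using g_decay[of t] by blast
  have S0: "S \<ge> 0" unfolding S_def using S_summable c0 by (auto intro!: suminf_nonneg)
  define C where "C = max S Z"
  define A where "A = (1 + 1/q^t) * B"
  have C0: "C \<ge> 0" using S0 by (simp add: C_def)
  have BA: "B \<le> A" using B_pos q0 by (simp add: A_def field_simps)
  have A0: "A > 0" using B_pos BA by simp
  have "norm (D e (pt k \<epsilon>)) * om t k \<le> C * A^e" if e: "\<epsilon> \<in> {-1,1}" for e k \<epsilon>
    using e
  proof (induction e arbitrary: k \<epsilon>)
    case 0
    show ?case
    proof (cases "k < 0")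
      case True
      then show ?thesis using Z[OF True 0] by (simp add: om_def qderivsD_0 C_def)
    next
      case False
      have "norm (D 0 (pt k \<epsilon>)) = norm (G 0 (pt k \<epsilon>))" using D_small[of k \<epsilon> 0] False 0 by simp
      also have "\<dots> \<le> B^0 * S"
        by (rule G_bound) (use norm_pt[OF 0] powi_le1[of k] False c0 powi_pos[of k] in \<open>simp add: mult_left_le_one_le\<close>)
      finally show ?thesis using False by (simp add: om_def C_def)
    qed
  next
    case (Suc e)
    show ?case
    proof (cases "k < 0")
      case False
      have "norm (D (Suc e) (pt k \<epsilon>)) = norm (G (Suc e) (pt k \<epsilon>))" using D_small[of k \<epsilon> "Suc e"] False Suc(2) by simp
      also have "\<dots> \<le> B^Suc e * S"
        by (rule G_bound) (use norm_pt[OF Suc(2)] powi_le1[of k] False c0 powi_pos[of k] in \<open>simp add: mult_left_le_one_le\<close>)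
      also have "\<dots> \<le> A^Suc e * C"
      proof (rule mult_mono)
        show "B^Suc e \<le> A^Suc e" by (rule power_mono) (use BA B_pos in auto)
      qed (use A0 S0 in \<open>auto simp: C_def\<close>)
      finally show ?thesis using False by (simp add: om_def mult.commute)
    next
      case True
      define y where "y = q powi k"
      have y1: "y \<ge> 1" unfolding y_def by (rule powi_ge1[OF True])
      have omk: "om t k = y^t" using True by (simp add: om_def y_def)
      have i1: "norm (D e (pt k \<epsilon>)) * y^t \<le> C * A^e" using Suc.IH[OF Suc(2), of k] omk by simp
      have i2': "norm (D e (pt (k+1) \<epsilon>)) * (y^t * q^t) \<le> C * A^e"
        using Suc.IH[OF Suc(2), of "k+1"] om_succ[OF True, of t] by (simp add: y_def)
      have qt: "q^t > 0" using q0 by simp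
      have i2: "norm (D e (pt (k+1) \<epsilon>)) * y^t \<le> C * A^e / q^t"
        using i2' qt by (simp add: field_simps)
      have np: "norm (of_real (1-q) * pt k \<epsilon>) = (1-q) * (y * c)"
        unfolding norm_mult norm_of_real norm_pt[OF Suc(2)] using q1 by (simp add: y_def)
      have den: "(1-q) * (y * c) \<ge> (1-q) * c" using q1 c0 y1 by (simp add: mult_le_cancel_left1)
      have den0: "(1-q) * c > 0" using q1 c0 by simp
      have X0: "0 \<le> C * A^e + C * A^e / q^t" using C0 A0 qt by simp
      have "norm (D (Suc e) (pt k \<epsilon>)) * y^t =
            norm (D e (pt k \<epsilon>) - D e (pt (k+1) \<epsilon>)) * y^t / ((1-q) * (y * c))"
        unfolding D_rel[OF Suc(2)] norm_divide np by simp
      also have "\<dots> \<le> (norm (D e (pt k \<epsilon>)) * y^t + norm (D e (pt (k+1) \<epsilon>)) * y^t) / ((1-q) * (y * c))"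
        using den den0 y1
        by (intro divide_right_mono) (auto simp: distrib_right[symmetric] intro!: mult_right_mono norm_triangle_ineq4)
      also have "\<dots> \<le> (C * A^e + C * A^e / q^t) / ((1-q) * (y * c))"
        using den den0 i1 i2 by (intro divide_right_mono) auto
      also have "\<dots> \<le> (C * A^e + C * A^e / q^t) / ((1-q) * c)"
        using den den0 X0 by (intro divide_left_mono) auto
      also have "\<dots> = C * A^e * ((1 + 1/q^t) * B)"
        by (simp add: B_def algebra_simps)
      also have "\<dots> = C * A^Suc e"
        unfolding A_def[symmetric] by (simp add: algebra_simps)
      finally show ?thesis using omk by simp
    qed
  qed
  then show ?thesis using C0 A0 by blast
qed


lemma lat_term_bound: "\<exists>K A. 0 \<le> K \<and> 0 < A \<and> (\<forall>e k \<epsilon>. \<epsilon> \<in> {-1,1} \<longrightarrow>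
   norm (qint_summand q c (\<lambda>x. D e x * x^m) (k,\<epsilon>)) \<le> K * A^e * q ^ nat \<bar>k\<bar>)"
proof -
  obtain C A where C0: "0 \<le> C" and A0: "0 < A"
    and CA: "\<And>e k \<epsilon>. \<epsilon> \<in> {-1,1} \<Longrightarrow> norm (D e (pt k \<epsilon>)) * om (m+2) k \<le> C * A^e"
    using D_bound[of "m+2"] by blast
  have "norm (qint_summand q c (\<lambda>x. D e x * x^m) (k,\<epsilon>)) \<le> (c^(m+1) * C) * A^e * q ^ nat \<bar>k\<bar>"
    if e: "\<epsilon> \<in> {-1,1}" for e k \<epsilon>
  proof -
    define y where "y = q powi k"
    have y0: "y > 0" unfolding y_def by (rule powi_pos)
    have eqn: "norm (qint_summand q c (\<lambda>x. D e x * x^m) (k,\<epsilon>)) = c^(m+1) * (norm (D e (pt k \<epsilon>)) * y^(m+1))"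
      unfolding qint_summand_ptl norm_mult norm_of_real norm_power norm_pt[OF e]
      using y0 c0 by (simp add: y_def abs_mult power_mult_distrib algebra_simps)
    have W: "norm (D e (pt k \<epsilon>)) * y^(m+1) \<le> C * A^e * q ^ nat \<bar>k\<bar>"
    proof (cases "k < 0")
      case False
      have y1: "y \<le> 1" unfolding y_def using powi_le1 False by simp
      have yq: "y = q ^ nat \<bar>k\<bar>" unfolding y_def using powi_nonneg_eq False by simp
      have nD: "norm (D e (pt k \<epsilon>)) \<le> C * A^e" using CA[OF e, of e k] False by (simp add: om_def)
      have "y^(m+1) \<le> y" using y0 y1 by (simp add: mult_left_le_one_le power_le_one)
      then have "norm (D e (pt k \<epsilon>)) * y^(m+1) \<le> C * A^e * y"
        by (rule mult_mono[OF nD]) (use y0 C0 A0 in auto)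
      then show ?thesis using yq by simp
    next
      case True
      have yq: "inverse y = q ^ nat \<bar>k\<bar>" unfolding y_def using powi_neg_eq True by simp
      have nD: "norm (D e (pt k \<epsilon>)) * y^(m+2) \<le> C * A^e" using CA[OF e, of e k] True by (simp add: om_def y_def)
      have "norm (D e (pt k \<epsilon>)) * y^(m+1) = (norm (D e (pt k \<epsilon>)) * y^(m+2)) * inverse y"
        using y0 by (simp add: field_simps)
      also have "\<dots> \<le> C * A^e * inverse y" using mult_right_mono[OF nD, of "inverse y"] y0 by simp
      finally show ?thesis using yq by simp
    qed
    show ?thesis unfolding eqn using mult_left_mono[OF W, of "c^(m+1)"] c0 by (simp add: algebra_simps)
  qed
  then show ?thesis using C0 A0 c0 by (intro exI[of _ "c^(m+1) * C"] exI[of _ A]) auto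
qed

lemma SUMM: "qint_summand q c (\<lambda>x. D e x * x^m) summable_on I"
proof -
  obtain K A where "\<forall>e k \<epsilon>. \<epsilon> \<in> {-1,1} \<longrightarrow>
   norm (qint_summand q c (\<lambda>x. D e x * x^m) (k,\<epsilon>)) \<le> K * A^e * q ^ nat \<bar>k\<bar>"
    using lat_term_bound[of m] by blast
  then show ?thesis by (intro lat_summable(2)[where K = "K * A^e"]) auto
qed

lemma V_summable: "(\<lambda>k. D j (pt k 1) - D j (pt k (-1))) summable_on UNIV"
proof -
  obtain C A where C0: "0 \<le> C" and A0: "0 < A"
    and CA: "\<And>e k \<epsilon>. \<epsilon> \<in> {-1,1} \<Longrightarrow> norm (D e (pt k \<epsilon>)) * om 1 k \<le> C * A^e"
    using D_bound[of 1] by blast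
  have S0: "S \<ge> 0" unfolding S_def using S_summable c0 by (auto intro!: suminf_nonneg)
  define K where "K = 2 * B^j * S + 2 * C * A^j"
  have bd: "norm (D j (pt k 1) - D j (pt k (-1))) \<le> K * q ^ nat \<bar>k\<bar>" for k
  proof (cases "k < 0")
    case False
    define y where "y = q powi k"
    have yq: "y = q ^ nat \<bar>k\<bar>" unfolding y_def using powi_nonneg_eq False by simp
    have y0: "y > 0" unfolding y_def by (rule powi_pos)
    have y1: "y \<le> 1" unfolding y_def using powi_le1 False by simp
    have neg: "pt k (-1) = - pt k 1" by (simp add: ptl_def)
    have np: "norm (pt k 1) = y * c" using norm_pt[of 1 k] by (simp add: y_def)
    have nc: "norm (pt k 1) \<le> c" using np y1 c0 by (simp add: mult_left_le_one_le)
    have "norm (D j (pt k 1) - D j (pt k (-1))) = norm (G j (pt k 1) - G j (- pt k 1))"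
      using D_small[of k 1 j] D_small[of k "-1" j] False neg by simp
    also have "\<dots> \<le> 2 * (norm (pt k 1) / c) * (B^j * S)" by (rule G_odd[OF nc])
    also have "\<dots> = (2 * B^j * S) * y" using np c0 by simp
    also have "\<dots> \<le> K * y" using C0 A0 y0 by (intro mult_right_mono) (auto simp: K_def)
    finally show ?thesis using yq by simp
  next
    case True
    define y where "y = q powi k"
    have yq: "inverse y = q ^ nat \<bar>k\<bar>" unfolding y_def using powi_neg_eq True by simp
    have y0: "y > 0" unfolding y_def by (rule powi_pos)
    have b1: "norm (D j (pt k \<epsilon>)) \<le> C * A^j * inverse y" if "\<epsilon> \<in> {-1,1}" for \<epsilon>
    proof -
      have "norm (D j (pt k \<epsilon>)) * y \<le> C * A^j" using CA[OF that, of j k] True by (simp add: om_def y_def)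
      then show ?thesis using y0 by (simp add: field_simps)
    qed
    have "norm (D j (pt k 1) - D j (pt k (-1))) \<le> norm (D j (pt k 1)) + norm (D j (pt k (-1)))"
      by (rule norm_triangle_ineq4)
    also have "\<dots> \<le> C * A^j * inverse y + C * A^j * inverse y" by (rule add_mono[OF b1 b1]) auto
    also have "\<dots> \<le> K * inverse y"
      using S0 B_pos y0 by (simp add: K_def algebra_simps)
    finally show ?thesis using yq by simp
  qed
  have "(\<lambda>k. K * q ^ nat \<bar>k\<bar>) summable_on UNIV"
    using geom_int_summable[OF q0 q1] by (rule summable_on_cmult_right)
  then have "(\<lambda>k. norm (D j (pt k 1) - D j (pt k (-1)))) summable_on UNIV"
    by (rule Infinite_Sum.abs_summable_on_comparison_test') (use bd in auto)
  then show ?thesis by (rule abs_summable_summable)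
qed

definition "J e m = infsum (qint_summand q c (\<lambda>x. D e x * x^m)) I"
definition "kap n = complex_of_real ((1 - 1/q^n)/(1-q))"
definition "Kp m i = (\<Prod>l\<in>{1..i}. kap (m + l))"

lemma J_step: "J (Suc e) (Suc m) = kap (Suc m) * J e m"
  unfolding J_def kap_def by (rule lat_ibp[OF D_rel SUMM])

lemma J_zero: "J (Suc e) 0 = 0"
  unfolding J_def by (rule lat_zero[OF D_rel SUMM V_summable])

lemma J_chain: "J (e + i) (m + i) = Kp m i * J e m"
proof (induction i)
  case 0 then show ?case by (simp add: Kp_def)
next
  case (Suc i)
  have "J (e + Suc i) (m + Suc i) = kap (Suc (m + i)) * J (e + i) (m + i)"
    using J_step[of "e+i" "m+i"] by simp
  also have "\<dots> = Kp m (Suc i) * J e m"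
    using Suc.IH by (simp add: Kp_def prod.cl_ivl_Suc algebra_simps)
  finally show ?case .
qed

lemma kap_nz: "n \<ge> 1 \<Longrightarrow> kap n \<noteq> 0"
proof -
  assume n: "n \<ge> 1"
  have qn: "q^n < 1" using q0 q1 n by (simp add: power_less_one_iff)
  then have "1/q^n > 1" using q0 by simp
  then have "(1 - 1/q^n)/(1-q) \<noteq> 0" using q1 qn by auto
  then show ?thesis unfolding kap_def of_real_eq_0_iff .
qed

lemma Kp_nz: "Kp m i \<noteq> 0"
  unfolding Kp_def using kap_nz by (simp add: prod_zero_iff)

lemma J_high: "m < e \<Longrightarrow> J e m = 0"
proof -
  assume "m < e"
  then have e: "e = Suc (e - m - 1) + m" by simp
  have "J (Suc (e - m - 1) + m) (0 + m) = Kp 0 m * J (Suc (e - m - 1)) 0" by (rule J_chain)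
  then show ?thesis using J_zero e by simp
qed

lemma J_low: "e \<le> m \<Longrightarrow> J e m = Kp (m - e) e * J 0 (m - e)"
  using J_chain[of 0 e "m - e"] by simp

lemma moment_J: "qmoment q c g j = of_real (q ^ ((j^2 + j) div 2)) * (of_real (1-q) * J 0 j)"
  by (simp add: qmoment_def qint_def J_def qderivsD_0)


lemma qfact_pos: "qfact q e > 0"
  unfolding qfact_def using q0 q1
  by (intro prod_pos) (auto simp: power_less_one_iff intro!: divide_pos_pos)

lemma key:
  fixes \<gamma> :: real and f :: "complex \<Rightarrow> complex"
  assumes If: "I_E q \<gamma> f"
    and hz: "qconv_zero q \<gamma> f (qlat q c) g"
  shows "(\<forall>e. qmoment q \<gamma> f e = 0) \<or> (\<forall>e. qmoment q c g e = 0)"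
proof (rule ccontr)
  assume "\<not> ?thesis"
  then obtain e1 e2 where e1: "qmoment q \<gamma> f e1 \<noteq> 0" and e2: "qmoment q c g e2 \<noteq> 0" by blast
  define a0 where "a0 = (LEAST e. qmoment q \<gamma> f e \<noteq> 0)"
  define b0 where "b0 = (LEAST e. qmoment q c g e \<noteq> 0)"
  have fa: "qmoment q \<gamma> f a0 \<noteq> 0" unfolding a0_def by (rule LeastI[of _ e1]) (rule e1)
  have fa': "\<And>e. e < a0 \<Longrightarrow> qmoment q \<gamma> f e = 0" unfolding a0_def using not_less_Least by blast
  have gb: "qmoment q c g b0 \<noteq> 0" unfolding b0_def by (rule LeastI[of _ e2]) (rule e2)
  have gb': "\<And>e. e < b0 \<Longrightarrow> qmoment q c g e = 0" unfolding b0_def using not_less_Least by blast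
  define n where "n = a0 + b0"
  define cf where "cf = (\<lambda>e. (-1)^e * qmoment q \<gamma> f e / complex_of_real (qfact q e))"
  have ct: "qconv_term q \<gamma> f g x e = cf e * D e x" for x e
    by (simp add: qconv_term_def cf_def qderivsD_def)
  have ncf: "norm (cf e) = norm (qmoment q \<gamma> f e / complex_of_real (qfact q e))" for e
    by (simp add: cf_def norm_mult norm_divide norm_power)
  have alpha: "summable (\<lambda>e. norm (cf e) * A^e)" if A0: "A \<ge> 0" for A
  proof -
    have "summable (\<lambda>k. qmoment q \<gamma> f k * (of_real (A+1))^k / complex_of_real (qfact q k))"
      using If unfolding I_E_def by blast
    then have "summable (\<lambda>k. (qmoment q \<gamma> f k / complex_of_real (qfact q k)) * (of_real (A+1))^k)"
      by (simp add: field_simps)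
    moreover have "norm (complex_of_real A) < norm (complex_of_real (A+1))"
      unfolding norm_of_real using A0 by simp
    ultimately have "summable (\<lambda>k. norm ((qmoment q \<gamma> f k / complex_of_real (qfact q k)) * (of_real A)^k))"
      by (rule powser_insidea)
    moreover have eqk: "\<And>k. norm ((qmoment q \<gamma> f k / complex_of_real (qfact q k)) * (of_real A)^k) = norm (cf k) * A^k"
      using A0 by (simp only: norm_mult norm_power norm_of_real ncf abs_of_nonneg)
    ultimately show ?thesis by simp
  qed
  have conv0: "(\<Sum>e. cf e * D e (pt k \<epsilon>)) = 0" and convs: "summable (\<lambda>e. norm (cf e * D e (pt k \<epsilon>)))"
    if e: "\<epsilon> \<in> {-1,1}" for k \<epsilon>
  proof -
    obtain C A where C0: "0 \<le> C" and A0: "0 < A"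
      and CA: "\<And>e k \<epsilon>. \<epsilon> \<in> {-1,1} \<Longrightarrow> norm (D e (pt k \<epsilon>)) * om 0 k \<le> C * A^e"
      using D_bound[of 0] by blast
    have b: "norm (cf e * D e (pt k \<epsilon>)) \<le> C * (norm (cf e) * A^e)" for e
    proof -
      have "om 0 k = 1" by (simp add: om_def)
      then have "norm (D e (pt k \<epsilon>)) \<le> C * A^e" using CA[OF \<open>\<epsilon> \<in> {-1,1}\<close>, of e k] by simp
      then have "norm (cf e) * norm (D e (pt k \<epsilon>)) \<le> norm (cf e) * (C * A^e)" by (rule mult_left_mono) simp
      then show ?thesis by (simp add: norm_mult algebra_simps)
    qed
    show sm: "summable (\<lambda>e. norm (cf e * D e (pt k \<epsilon>)))"
      by (rule summable_comparison_test'[OF summable_mult[OF alpha[of A]]]) (use A0 b in auto)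
    have "qconv_defined q \<gamma> f (qlat q c) g (pt k \<epsilon>)"
      unfolding qconv_defined_def
    proof (intro conjI allI)
      fix e
      show "qderivs_defined q (qlat q c) g e (pt k \<epsilon>)"
        unfolding qderivs_defined_def using pt_nz[OF e] pt_add_nat pt_qlat[OF e] by simp
      show "summable (\<lambda>e. norm (qconv_term q \<gamma> f g (pt k \<epsilon>) e))" using sm by (simp add: ct)
    qed
    then have "qconv q \<gamma> f g (pt k \<epsilon>) = 0" using hz unfolding qconv_zero_def by blast
    moreover have "qconv_term q \<gamma> f g (pt k \<epsilon>) = (\<lambda>e. cf e * D e (pt k \<epsilon>))" by (rule ext) (rule ct)
    ultimately show "(\<Sum>e. cf e * D e (pt k \<epsilon>)) = 0" by (simp add: qconv_def)
  qed
  obtain K A where K0: "0 \<le> K" and A0: "0 < A" and KA: "\<And>e k \<epsilon>. \<epsilon> \<in> {-1,1} \<Longrightarrow>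
     norm (qint_summand q c (\<lambda>x. D e x * x^n) (k,\<epsilon>)) \<le> K * A^e * q ^ nat \<bar>k\<bar>"
    using lat_term_bound[of n] by blast
  define u where "u = (\<lambda>x e. cf e * qint_summand q c (\<lambda>x. D e x * x^n) x)"
  have sw: "infsum (\<lambda>x. infsum (u x) UNIV) I = infsum (\<lambda>e. infsum (\<lambda>x. u x e) I) UNIV"
  proof (rule lat_swap[where \<alpha> = "\<lambda>e. norm (cf e) * A^e" and K = K])
    show "(\<lambda>e. norm (cf e) * A^e) summable_on UNIV"
      using alpha[of A] A0 by (subst summable_on_UNIV_nonneg_real_iff) auto
    fix k \<epsilon> e assume e: "\<epsilon> \<in> {-1,1::real}"
    show "norm (u (k,\<epsilon>) e) \<le> norm (cf e) * A^e * (K * q ^ nat \<bar>k\<bar>)"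
      unfolding u_def norm_mult using mult_left_mono[OF KA[OF e, of e k], of "norm (cf e)"]
      by (simp add: algebra_simps)
  qed (use K0 A0 in auto)
  have lhs: "infsum (u x) UNIV = 0" if "x \<in> I" for x
  proof -
    obtain k \<epsilon> where x: "x = (k,\<epsilon>)" and e: "\<epsilon> \<in> {-1,1}" using \<open>x \<in> I\<close> by auto
    define w where "w = complex_of_real (q powi k * c) * pt k \<epsilon> ^ n"
    have ux: "u x e = w * (cf e * D e (pt k \<epsilon>))" for e
      by (simp add: u_def x qint_summand_ptl w_def)
    have "((\<lambda>e. cf e * D e (pt k \<epsilon>)) has_sum 0) UNIV"
      using norm_summable_imp_has_sum[OF convs[OF e] summable_sums[OF summable_norm_cancel[OF convs[OF e]]]]
        conv0[OF e] by simp
    then have "((\<lambda>e. w * (cf e * D e (pt k \<epsilon>))) has_sum w * 0) UNIV" by (rule has_sum_cmult_right)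
    then show ?thesis unfolding ux by (simp add: infsumI)
  qed
  have rhs: "infsum (\<lambda>x. u x e) I = cf e * J e n" for e
    unfolding u_def J_def by (rule infsum_cmult_right) (use SUMM in auto)
  have z1: "infsum (\<lambda>x. infsum (u x) UNIV) I = 0" by (rule infsum_0) (rule lhs)
  have z2: "(\<lambda>e. infsum (\<lambda>x. u x e) I) = (\<lambda>e. cf e * J e n)" by (rule ext) (rule rhs)
  have zero: "infsum (\<lambda>e. cf e * J e n) UNIV = 0"
    using sw unfolding z1 z2 by simp
  have single: "cf e * J e n = 0" if "e \<noteq> a0" for e
  proof (cases "e < a0")
    case True then show ?thesis using fa' by (simp add: cf_def)
  next
    case False
    then have ea: "a0 < e" using that by simp
    show ?thesis
    proof (cases "n < e")
      case True then show ?thesis using J_high by simp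
    next
      case False
      then have "J e n = Kp (n - e) e * J 0 (n - e)" using J_low[of e n] False by simp
      moreover have "n - e < b0" using ea False by (simp add: n_def)
      then have "qmoment q c g (n - e) = 0" by (rule gb')
      then have "J 0 (n - e) = 0" using q0 q1 by (simp add: moment_J)
      ultimately show ?thesis by simp
    qed
  qed
  have "infsum (\<lambda>e. cf e * J e n) UNIV = infsum (\<lambda>e. cf e * J e n) {a0}"
    by (rule infsum_cong_neutral) (use single in auto)
  then have "cf a0 * J a0 n = 0" using zero by simp
  moreover have "cf a0 \<noteq> 0" using fa qfact_pos[of a0] by (simp add: cf_def)
  moreover have "J a0 n = Kp b0 a0 * J 0 b0" using J_low[of a0 n] by (simp add: n_def)
  moreover have "J 0 b0 \<noteq> 0" using gb by (auto simp: moment_J)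
  ultimately show False using Kp_nz by simp
qed

end

lemma zero_moments_conv:
  assumes "\<forall>e. qmoment q \<gamma> f e = 0"
  shows "qconv_zero q \<gamma> f D h"
proof -
  have "qconv_term q \<gamma> f h x = (\<lambda>e. 0)" for x
    by (rule ext) (simp add: qconv_term_def assms)
  then show ?thesis by (simp add: qconv_zero_def qconv_def)
qed

theorem corollary3p8:
  fixes q \<gamma> \<gamma>' :: real and f g :: "complex \<Rightarrow> complex"
  assumes "0 < q" "q < 1" "\<gamma> > 0" "\<gamma>' > 0"
    and "HD_I_E q \<gamma> f" and "HD_I_E q \<gamma>' g"
    and "qconv_zero q \<gamma> f (qlat q \<gamma>') g"
  shows "((\<forall>D h. qconv_zero q \<gamma> f D h) \<or> (\<forall>D h. qconv_zero q \<gamma>' g D h))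
         \<and> (qconv_zero q \<gamma> f (qlat q \<gamma>) f \<or> qconv_zero q \<gamma>' g (qlat q \<gamma>') g)"
proof -
  obtain r F where r: "r > \<gamma>'" and Fh: "F holomorphic_on ball 0 r"
    and Fg: "\<forall>x \<in> qlat q \<gamma>' \<inter> ball 0 r. F x = g x"
    using assms(6) unfolding HD_I_E_def by blast
  have Ig: "I_inf q \<gamma>' g" using assms(6) unfolding HD_I_E_def I_E_def by blast
  have If: "I_E q \<gamma> f" using assms(5) unfolding HD_I_E_def by blast
  interpret gs q \<gamma>' g F r
    by unfold_locales (use assms(1-4) r Fh Fg Ig in auto)
  have "(\<forall>e. qmoment q \<gamma> f e = 0) \<or> (\<forall>e. qmoment q \<gamma>' g e = 0)"
    by (rule key[OF If assms(7)])
  then show ?thesis using zero_moments_conv by blast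
qed

end
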